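(* Let $n\ge1$, $\mathcal{X}$ the simplex in $\mathbb{R}^{n+1}$, $\theta$ a kernel, $\Phi$ a Lipschitz continuous smooth function on an open neighborhood of $\mathcal{X}$, and $\eta>0$. If $x(t)$ is a solution trajectory of the inertial dynamics (ID) in $\mathcal{X}^\circ$ that is defined for all $t\ge0$, then $\lim_{t\to\infty}\dot x(t)=0$.
   Context: $\mathcal{X}=\{x\in\mathbb{R}^{n+1}:x_\alpha\ge0,\sum_\alpha x_\alpha=1\}$ with relative interior $\mathcal{X}^\circ$. A kernel is a $C^\infty$ function $\theta:[0,\infty)\to\mathbb{R}\cup\{+\infty\}$ with $\theta(x)<\infty$ for $x>0$, $\lim_{x\to0^+}\theta'(x)=-\infty$, $\theta''>0$, $\theta'''<0$ on $(0,\infty)$. With $\theta''_\alpha=\theta''(x_\alpha)$, $\theta'''_\alpha=\theta'''(x_\alpha)$, $\Theta''=(\sum_\beta1/\theta''_\beta)^{-1}$, $v_\alpha=\partial\Phi/\partial x_\alpha$, the inertial dynamics (ID) on $\mathcal{X}^\circ$ are $$\ddot x_\alpha=\frac{1}{\theta''_\alpha}\Big[v_\alpha-\sum_{\beta}\frac{\Theta''}{\theta''_\beta}v_\beta\Big]-\frac{1}{2\theta''_\alpha}\Big[\theta'''_\alpha\dot x_\alpha^2-\sum_\beta\frac{\Theta''}{\theta''_\beta}\theta'''_\beta\dot x_\beta^2\Big]-\eta\dot x_\alpha.$$ *)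

theory Defs
  imports "HOL-Analysis.Analysis"
begin

definition std_simplex :: "(real ^ 'n::finite) set" where
  "std_simplex = {x. (\<forall>a. 0 \<le> x $ a) \<and> (\<Sum>a\<in>UNIV. x $ a) = 1}"

definition std_simplex_relint :: "(real ^ 'n::finite) set" where
  "std_simplex_relint = {x. (\<forall>a. 0 < x $ a) \<and> (\<Sum>a\<in>UNIV. x $ a) = 1}"

definition smooth1_on :: "(real \<Rightarrow> real) \<Rightarrow> real set \<Rightarrow> bool" where
  "smooth1_on f S \<longleftrightarrow> (\<forall>k. \<forall>x\<in>S. (deriv ^^ k) f differentiable (at x))"

text \<open>Kernel (restricted to (0,oo); the value at 0 does not enter the dynamics).\<close>
definition kernel :: "(real \<Rightarrow> real) \<Rightarrow> bool" where
  "kernel \<theta> \<longleftrightarrow> smooth1_on \<theta> {0<..}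
     \<and> filterlim (deriv \<theta>) at_bot (at_right 0)
     \<and> (\<forall>x>0. (deriv ^^ 2) \<theta> x > 0)
     \<and> (\<forall>x>0. (deriv ^^ 3) \<theta> x < 0)"

definition partial :: "'n::finite \<Rightarrow> (real ^ 'n \<Rightarrow> real) \<Rightarrow> real ^ 'n \<Rightarrow> real" where
  "partial i f x = frechet_derivative f (at x) (axis i 1)"

fun Ck_on :: "nat \<Rightarrow> (real ^ 'n::finite \<Rightarrow> real) \<Rightarrow> (real ^ 'n) set \<Rightarrow> bool" where
  "Ck_on 0 f U = continuous_on U f"
| "Ck_on (Suc k) f U = (f differentiable_on U \<and> (\<forall>i. Ck_on k (partial i f) U))"

definition smooth_on :: "(real ^ 'n::finite \<Rightarrow> real) \<Rightarrow> (real ^ 'n) set \<Rightarrow> bool" where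
  "smooth_on f U \<longleftrightarrow> (\<forall>k. Ck_on k f U)"

definition ID_rhs :: "(real \<Rightarrow> real) \<Rightarrow> (real ^ 'n::finite \<Rightarrow> real) \<Rightarrow> real
    \<Rightarrow> real ^ 'n \<Rightarrow> real ^ 'n \<Rightarrow> 'n \<Rightarrow> real" where
  "ID_rhs \<theta> \<Phi> \<eta> x xd a =
    (let th2 = (\<lambda>b. (deriv ^^ 2) \<theta> (x $ b));
         th3 = (\<lambda>b. (deriv ^^ 3) \<theta> (x $ b));
         Th2 = 1 / (\<Sum>b\<in>UNIV. 1 / th2 b);
         v = (\<lambda>b. partial b \<Phi> x)
     in (1 / th2 a) * (v a - (\<Sum>b\<in>UNIV. Th2 / th2 b * v b))
        - (1 / (2 * th2 a)) * (th3 a * (xd $ a)^2 - (\<Sum>b\<in>UNIV. Th2 / th2 b * th3 b * (xd $ b)^2))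
        - \<eta> * xd $ a)"

end

theory Submission
  imports Defs
begin

lemma comp_deriv:
  fixes x :: "real \<Rightarrow> real ^ 'n::finite"
  assumes "(x has_vector_derivative v) (at t within S)"
  shows "((\<lambda>s. x s $ a) has_real_derivative v $ a) (at t within S)"
proof -
  have "((\<lambda>s. x s $ a) has_derivative (\<lambda>h. (h *\<^sub>R v) $ a)) (at t within S)"
    using bounded_linear.has_derivative[OF bounded_linear_vec_nth[of a] assms[unfolded has_vector_derivative_def]] .
  moreover have "(\<lambda>h. (h *\<^sub>R v) $ a) = (*) (v $ a)" by (auto simp: mult.commute)
  ultimately show ?thesis by (simp add: has_field_derivative_def)
qed

lemma mvt0:
  fixes f f' :: "real \<Rightarrow> real"
  assumes "0 \<le> a" "a \<le> b" "\<And>t. t \<ge> 0 \<Longrightarrow> (f has_real_derivative f' t) (at t within {0..})"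
  shows "\<exists>\<xi>\<in>{a..b}. f b - f a = f' \<xi> * (b - a)"
proof -
  have "\<exists>\<xi>\<in>{a..b}. f b - f a = (\<lambda>t h. f' t * h) \<xi> (b - a)"
  proof (rule mvt_very_simple[OF assms(2)])
    fix t assume "a \<le> t" "t \<le> b"
    then have "(f has_real_derivative f' t) (at t within {a..b})"
      using assms(1) by (intro has_field_derivative_subset[OF assms(3)]) auto
    then show "(f has_derivative (\<lambda>h. f' t * h)) (at t within {a..b})"
      by (simp add: has_field_derivative_def)
  qed
  then show ?thesis by simp
qed

lemma sum_zero_deriv:
  fixes g :: "real \<Rightarrow> real"
  assumes "t \<ge> 0" "(g has_real_derivative D) (at t within {0..})" "\<And>s. s \<ge> 0 \<Longrightarrow> g s = 1"
  shows "D = 0"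
proof -
  have "(g has_real_derivative D) (at t within {t..t+1})"
    using assms by (intro has_field_derivative_subset[OF assms(2)]) auto
  moreover have "(g has_real_derivative 0) (at t within {t..t+1})"
    by (rule has_field_derivative_transform_within[where f="\<lambda>_. 1" and d=1]) (use assms in auto)
  ultimately show ?thesis
    using vector_derivative_unique_within_closed_interval[of t "t+1" t g D 0]
    by (auto simp: has_real_derivative_iff_has_vector_derivative)
qed

lemma alg:
  fixes A B X V S1 S2 \<eta> :: real
  assumes "A > 0"
  shows "B * X * X^2 + A * (2 * X * ((1/A)*(V - S1) - (1/(2*A))*(B*X^2 - S2) - \<eta>*X))
         = 2*X*V - 2*\<eta>*(A*X^2) + X*(S2 - 2*S1)"
  using assms by (simp add: field_simps power2_eq_square)

lemma th3_eq: "(deriv^^3) \<theta> = deriv ((deriv^^2) \<theta>)"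
  by (simp add: numeral_3_eq_3 numeral_2_eq_2)

theorem proposition3p2:
  fixes \<theta> :: "real \<Rightarrow> real" and \<Phi> :: "real ^ 'n::finite \<Rightarrow> real"
    and U :: "(real ^ 'n) set" and \<eta> :: real
    and x xd xdd :: "real \<Rightarrow> real ^ 'n"
  assumes dim: "CARD('n) \<ge> 2"
    and ker: "kernel \<theta>"
    and U: "open U" "std_simplex \<subseteq> U"
    and Phi_smooth: "smooth_on \<Phi> U"
    and Phi_lip: "\<exists>L. L-lipschitz_on U \<Phi>"
    and eta: "\<eta> > 0"
    and x_in: "\<forall>t\<ge>0. x t \<in> std_simplex_relint"
    and x_deriv: "\<forall>t\<ge>0. (x has_vector_derivative xd t) (at t within {0..})"
    and xd_deriv: "\<forall>t\<ge>0. (xd has_vector_derivative xdd t) (at t within {0..})"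
    and ID: "\<forall>t\<ge>0. \<forall>a. xdd t $ a = ID_rhs \<theta> \<Phi> \<eta> (x t) (xd t) a"
  shows "(xd \<longlongrightarrow> 0) at_top"
proof -
  define th2 where "th2 = (deriv^^2) \<theta>"
  define th3 where "th3 = (deriv^^3) \<theta>"
  have sm: "smooth1_on \<theta> {0<..}" and th2pos: "\<And>y. y > 0 \<Longrightarrow> th2 y > 0"
    and th3neg: "\<And>y. y > 0 \<Longrightarrow> th3 y < 0"
    using ker unfolding kernel_def th2_def th3_def by auto
  have dth2: "(th2 has_real_derivative th3 y) (at y)" if "y > 0" for y
  proof -
    have "th2 differentiable (at y)" using sm that unfolding smooth1_on_def th2_def by auto
    then have "(th2 has_real_derivative deriv th2 y) (at y)"
      by (simp add: DERIV_deriv_iff_real_differentiable)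
    then show ?thesis unfolding th3_def th3_eq th2_def .
  qed
  define m where "m = th2 1"
  have mpos: "m > 0" unfolding m_def by (rule th2pos) simp
  have th2_ge: "th2 y \<ge> m" if "0 < y" "y \<le> 1" for y
    unfolding m_def
  proof (rule DERIV_nonpos_imp_nonincreasing[OF that(2)])
    fix z assume "y \<le> z" "z \<le> 1"
    then show "\<exists>D. (th2 has_real_derivative D) (at z) \<and> D \<le> 0"
      using dth2 th3neg that by (meson less_eq_real_def less_le_trans)
  qed
  have xpos: "x t $ a > 0" and xsum: "(\<Sum>a\<in>UNIV. x t $ a) = 1" if "t \<ge> 0" for t a
    using x_in that unfolding std_simplex_relint_def by auto
  have xle1: "x t $ a \<le> 1" if "t \<ge> 0" for t a
  proof -
    have "x t $ a \<le> (\<Sum>b\<in>UNIV. x t $ b)"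
      by (rule member_le_sum) (use xpos[OF that] less_imp_le in auto)
    then show ?thesis using xsum[OF that] by simp
  qed
  have xU: "x t \<in> U" if "t \<ge> 0" for t
  proof -
    have "x t \<in> std_simplex" using x_in that unfolding std_simplex_relint_def std_simplex_def
      by (auto intro: less_imp_le)
    then show ?thesis using U(2) by blast
  qed
  obtain L where Lip: "L-lipschitz_on U \<Phi>" using Phi_lip by blast
  have L0: "L \<ge> 0" using lipschitz_on_nonneg[OF Lip] .
  have Phidiff: "\<Phi> differentiable (at y)" if "y \<in> U" for y
  proof -
    have "Ck_on (Suc 0) \<Phi> U" using Phi_smooth unfolding smooth_on_def by blast
    then have "\<Phi> differentiable_on U" by simp
    then show ?thesis using differentiable_on_eq_differentiable_at[OF U(1)] that by blast
  qed
  have dxa: "((\<lambda>s. x s $ a) has_real_derivative xd t $ a) (at t within {0..})" if "t \<ge> 0" for t a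
    using comp_deriv x_deriv that by blast
  have dxda: "((\<lambda>s. xd s $ a) has_real_derivative xdd t $ a) (at t within {0..})" if "t \<ge> 0" for t a
    using comp_deriv xd_deriv that by blast
  have sumxd: "(\<Sum>a\<in>UNIV. xd t $ a) = 0" if "t \<ge> 0" for t
  proof (rule sum_zero_deriv[OF that])
    show "((\<lambda>s. \<Sum>a\<in>UNIV. x s $ a) has_real_derivative (\<Sum>a\<in>UNIV. xd t $ a)) (at t within {0..})"
      by (rule DERIV_sum) (use dxa that in auto)
  qed (use xsum in auto)
  define P where "P t = (\<Sum>a\<in>UNIV. partial a \<Phi> (x t) * xd t $ a)" for t
  define K where "K t = (\<Sum>a\<in>UNIV. th2 (x t $ a) * (xd t $ a)^2)" for t
  define E where "E t = K t - 2 * \<Phi> (x t)" for t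
  have dPhi: "((\<lambda>s. \<Phi> (x s)) has_real_derivative P t) (at t within {0..})" if "t \<ge> 0" for t
  proof -
    define D where "D = frechet_derivative \<Phi> (at (x t))"
    have hD: "(\<Phi> has_derivative D) (at (x t))"
      using Phidiff[OF xU[OF that]] unfolding D_def by (simp add: frechet_derivative_works)
    have lin: "linear D" using hD has_derivative_linear by blast
    have "((\<lambda>s. \<Phi> (x s)) has_derivative (\<lambda>h. D (h *\<^sub>R xd t))) (at t within {0..})"
      by (rule has_derivative_compose[OF x_deriv[rule_format, OF that, unfolded has_vector_derivative_def] hD])
    moreover have "(\<lambda>h. D (h *\<^sub>R xd t)) = (*) (P t)"
    proof
      fix h
      have "D (xd t) = D (\<Sum>a\<in>UNIV. (xd t $ a) *\<^sub>R axis a 1)"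
        using basis_expansion[of "xd t"] by (simp add: scalar_mult_eq_scaleR)
      also have "\<dots> = (\<Sum>a\<in>UNIV. xd t $ a * D (axis a 1))"
        by (simp add: linear_sum[OF lin] linear_scale[OF lin])
      also have "\<dots> = P t" unfolding P_def partial_def D_def by (simp add: mult.commute)
      finally show "D (h *\<^sub>R xd t) = P t * h"
        by (simp add: linear_scale[OF lin] mult.commute)
    qed
    ultimately show ?thesis by (simp add: has_field_derivative_def)
  qed
  have dK: "(K has_real_derivative 2 * P t - 2 * \<eta> * K t) (at t within {0..})" if "t \<ge> 0" for t
  proof -
    define S1 where "S1 = (\<Sum>b\<in>UNIV. (1 / (\<Sum>c\<in>UNIV. 1 / th2 (x t $ c))) / th2 (x t $ b) * partial b \<Phi> (x t))"
    define S2 where "S2 = (\<Sum>b\<in>UNIV. (1 / (\<Sum>c\<in>UNIV. 1 / th2 (x t $ c))) / th2 (x t $ b) * th3 (x t $ b) * (xd t $ b)^2)"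
    have xdd_eq: "xdd t $ a = (1 / th2 (x t $ a)) * (partial a \<Phi> (x t) - S1)
        - (1 / (2 * th2 (x t $ a))) * (th3 (x t $ a) * (xd t $ a)^2 - S2) - \<eta> * xd t $ a" for a
      using ID that unfolding ID_rhs_def Let_def S1_def S2_def th2_def th3_def by simp
    have d1: "((\<lambda>s. th2 (x s $ a) * (xd s $ a)^2) has_real_derivative
       (th3 (x t $ a) * xd t $ a) * (xd t $ a)^2 + (2 * xd t $ a * xdd t $ a) * th2 (x t $ a))
       (at t within {0..})" for a
    proof (rule DERIV_mult)
      show "((\<lambda>s. th2 (x s $ a)) has_real_derivative th3 (x t $ a) * xd t $ a) (at t within {0..})"
        by (rule DERIV_chain2[OF dth2[OF xpos[OF that]] dxa[OF that]])
      show "((\<lambda>s. (xd s $ a)^2) has_real_derivative 2 * xd t $ a * xdd t $ a) (at t within {0..})"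
        using DERIV_power[OF dxda[OF that], where n=2] by (simp add: mult.commute mult.left_commute)
    qed
    have "(K has_real_derivative (\<Sum>a\<in>UNIV. (th3 (x t $ a) * xd t $ a) * (xd t $ a)^2 + (2 * xd t $ a * xdd t $ a) * th2 (x t $ a))) (at t within {0..})"
      unfolding K_def[abs_def] by (rule DERIV_sum) (use d1 in auto)
    moreover have "(\<Sum>a\<in>UNIV. (th3 (x t $ a) * xd t $ a) * (xd t $ a)^2 + (2 * xd t $ a * xdd t $ a) * th2 (x t $ a))
       = (\<Sum>a\<in>UNIV. 2 * xd t $ a * partial a \<Phi> (x t) - 2 * \<eta> * (th2 (x t $ a) * (xd t $ a)^2) + xd t $ a * (S2 - 2 * S1))"
    proof (rule sum.cong[OF refl])
      fix a
      have "(th3 (x t $ a) * xd t $ a) * (xd t $ a)^2 + (2 * xd t $ a * xdd t $ a) * th2 (x t $ a)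
        = th3 (x t $ a) * xd t $ a * (xd t $ a)^2 + th2 (x t $ a) * (2 * xd t $ a * xdd t $ a)"
        by (simp add: algebra_simps)
      also have "\<dots> = 2 * xd t $ a * partial a \<Phi> (x t) - 2 * \<eta> * (th2 (x t $ a) * (xd t $ a)^2) + xd t $ a * (S2 - 2 * S1)"
        unfolding xdd_eq by (rule alg[OF th2pos[OF xpos[OF that]]])
      finally show "(th3 (x t $ a) * xd t $ a) * (xd t $ a)^2 + (2 * xd t $ a * xdd t $ a) * th2 (x t $ a)
        = 2 * xd t $ a * partial a \<Phi> (x t) - 2 * \<eta> * (th2 (x t $ a) * (xd t $ a)^2) + xd t $ a * (S2 - 2 * S1)" .
    qed
    moreover have "(\<Sum>a\<in>UNIV. 2 * xd t $ a * partial a \<Phi> (x t) - 2 * \<eta> * (th2 (x t $ a) * (xd t $ a)^2) + xd t $ a * (S2 - 2 * S1))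
       = 2 * P t - 2 * \<eta> * K t"
    proof -
      have "(\<Sum>a\<in>UNIV. 2 * xd t $ a * partial a \<Phi> (x t) - 2 * \<eta> * (th2 (x t $ a) * (xd t $ a)^2) + xd t $ a * (S2 - 2 * S1))
        = 2 * (\<Sum>a\<in>UNIV. partial a \<Phi> (x t) * xd t $ a) - 2 * \<eta> * (\<Sum>a\<in>UNIV. th2 (x t $ a) * (xd t $ a)^2) + (\<Sum>a\<in>UNIV. xd t $ a) * (S2 - 2 * S1)"
        by (simp add: sum.distrib sum_subtractf sum_distrib_left sum_distrib_right algebra_simps)
      then show ?thesis using sumxd[OF that] unfolding P_def K_def by simp
    qed
    ultimately show ?thesis by simp
  qed
  have dE: "(E has_real_derivative - 2 * \<eta> * K t) (at t within {0..})" if "t \<ge> 0" for t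
  proof -
    have "((\<lambda>s. K s - 2 * \<Phi> (x s)) has_real_derivative (2 * P t - 2 * \<eta> * K t) - 2 * P t) (at t within {0..})"
      by (intro DERIV_diff dK[OF that] DERIV_cmult dPhi[OF that])
    then show ?thesis unfolding E_def[abs_def] by simp
  qed
  have termnn: "0 \<le> th2 (x t $ a) * (xd t $ a)^2" if "t \<ge> 0" for t a
    using th2pos[OF xpos[OF that, of a]] by simp
  have Knn: "K t \<ge> 0" if "t \<ge> 0" for t
    unfolding K_def by (rule sum_nonneg) (use termnn[OF that] in auto)
  have Emono: "E t \<le> E s" if st: "0 \<le> s" "s \<le> t" for s t
  proof -
    obtain \<xi> where "\<xi> \<in> {s..t}" "E t - E s = - 2 * \<eta> * K \<xi> * (t - s)"
      using mvt0[OF st, of E "\<lambda>t. - 2 * \<eta> * K t"] dE by auto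
    moreover have "K \<xi> \<ge> 0" using Knn \<open>\<xi> \<in> {s..t}\<close> that by auto
    moreover have "0 \<le> 2 * \<eta> * K \<xi> * (t - s)"
      using eta st \<open>K \<xi> \<ge> 0\<close> by (intro mult_nonneg_nonneg) auto
    ultimately show ?thesis by linarith
  qed
  have normx: "norm (x t - x s) \<le> (\<Sum>a\<in>UNIV. \<bar>x t $ a - x s $ a\<bar>)" for t s
    using norm_le_l1_cart[of "x t - x s"] by simp
  have Phi_up: "\<Phi> (x t) \<le> \<Phi> (x 0) + 2 * L" if "t \<ge> 0" for t
  proof -
    have "dist (\<Phi> (x t)) (\<Phi> (x 0)) \<le> L * dist (x t) (x 0)"
      by (rule lipschitz_onD[OF Lip xU[OF that] xU]) simp
    moreover have "dist (x t) (x 0) \<le> 2"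
    proof -
      have "dist (x t) (x 0) \<le> (\<Sum>a\<in>UNIV. \<bar>x t $ a - x 0 $ a\<bar>)" using normx by (simp add: dist_norm)
      also have "\<dots> \<le> (\<Sum>a\<in>UNIV. x t $ a + x 0 $ a)"
        by (rule sum_mono) (use xpos[OF that] xpos[of 0] in \<open>auto simp: abs_if less_imp_le\<close>)
      also have "\<dots> = 2" using xsum[OF that] xsum[of 0] by (simp add: sum.distrib)
      finally show ?thesis .
    qed
    ultimately have "dist (\<Phi> (x t)) (\<Phi> (x 0)) \<le> L * 2"
      using mult_left_mono[OF \<open>dist (x t) (x 0) \<le> 2\<close> L0] by linarith
    then show ?thesis by (simp add: dist_real_def)
  qed
  define M where "M = E 0 + 2 * (\<Phi> (x 0) + 2 * L)"
  have Kbound: "K t \<le> M" if "t \<ge> 0" for t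
    using Emono[of 0 t] Phi_up[OF that] that unfolding E_def M_def by simp
  have M0: "M \<ge> 0" using Kbound[of 0] Knn[of 0] by simp
  define V where "V = sqrt (M / m)"
  have V0: "V \<ge> 0" unfolding V_def using M0 mpos by simp
  have xd2: "m * (xd t $ a)^2 \<le> th2 (x t $ a) * (xd t $ a)^2" if "t \<ge> 0" for t a
    by (rule mult_right_mono[OF th2_ge[OF xpos[OF that] xle1[OF that]]]) simp
  have xdbound: "\<bar>xd t $ a\<bar> \<le> V" if "t \<ge> 0" for t a
  proof -
    have "th2 (x t $ a) * (xd t $ a)^2 \<le> K t"
      unfolding K_def by (rule member_le_sum) (use termnn[OF that] in auto)
    then have "m * (xd t $ a)^2 \<le> M" using xd2[OF that, of a] Kbound[OF that] by simp
    then have "(xd t $ a)^2 \<le> M / m" using mpos by (simp add: field_simps)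
    then have "sqrt ((xd t $ a)^2) \<le> V" unfolding V_def by (rule real_sqrt_le_mono)
    then show ?thesis by simp
  qed
  have xlip: "\<bar>x t $ a - x s $ a\<bar> \<le> V * (t - s)" if st: "0 \<le> s" "s \<le> t" for s t a
  proof -
    obtain \<xi> where "\<xi> \<in> {s..t}" "x t $ a - x s $ a = xd \<xi> $ a * (t - s)"
      using mvt0[OF st, of "\<lambda>s. x s $ a" "\<lambda>t. xd t $ a"] dxa by auto
    moreover have "\<bar>xd \<xi> $ a\<bar> \<le> V" using xdbound \<open>\<xi> \<in> {s..t}\<close> that by auto
    ultimately show ?thesis using that by (simp add: abs_mult mult_right_mono)
  qed
  define C where "C = 2 * L * (real CARD('n) * V) + 2 * \<eta> * M"
  have C0: "C \<ge> 0" unfolding C_def using L0 V0 M0 eta by simp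
  have Klow: "K t \<ge> K s - C * (t - s)" if st: "0 \<le> s" "s \<le> t" for s t
  proof -
    have "dist (\<Phi> (x t)) (\<Phi> (x s)) \<le> L * dist (x t) (x s)"
      by (rule lipschitz_onD[OF Lip]) (use xU that in auto)
    moreover have "dist (x t) (x s) \<le> real CARD('n) * V * (t - s)"
    proof -
      have "dist (x t) (x s) \<le> (\<Sum>a\<in>UNIV. \<bar>x t $ a - x s $ a\<bar>)" using normx by (simp add: dist_norm)
      also have "\<dots> \<le> (\<Sum>a::'n\<in>UNIV. V * (t - s))" by (rule sum_mono) (use xlip that in auto)
      finally show ?thesis by simp
    qed
    ultimately have phl: "\<bar>\<Phi> (x t) - \<Phi> (x s)\<bar> \<le> L * (real CARD('n) * V * (t - s))"
      using mult_left_mono[OF \<open>dist (x t) (x s) \<le> real CARD('n) * V * (t - s)\<close> L0]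
      by (simp add: dist_real_def)
    obtain \<xi> where "\<xi> \<in> {s..t}" "E t - E s = - 2 * \<eta> * K \<xi> * (t - s)"
      using mvt0[OF st, of E "\<lambda>t. - 2 * \<eta> * K t"] dE by auto
    moreover have "K \<xi> \<le> M" using Kbound \<open>\<xi> \<in> {s..t}\<close> that by auto
    moreover have "2 * \<eta> * K \<xi> * (t - s) \<le> 2 * \<eta> * M * (t - s)"
      using eta st \<open>K \<xi> \<le> M\<close> by (intro mult_right_mono mult_left_mono) auto
    ultimately have "E t - E s \<ge> - 2 * \<eta> * M * (t - s)" by linarith
    then show ?thesis using phl unfolding E_def C_def by (simp add: algebra_simps)
  qed
  have Ebelow: "E t \<ge> - 2 * (\<Phi> (x 0) + 2 * L)" if "t \<ge> 0" for t
    using Knn[OF that] Phi_up[OF that] unfolding E_def by simp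
  have Klim: "(K \<longlongrightarrow> 0) at_top"
  proof (rule order_tendstoI)
    fix a :: real assume "a < 0"
    show "eventually (\<lambda>t. a < K t) at_top"
      using eventually_ge_at_top[of 0] by (rule eventually_mono) (use Knn \<open>a < 0\<close> in force)
  next
    fix \<epsilon> :: real assume \<epsilon>: "\<epsilon> > 0"
    define c where "c = Inf (E ` {0..})"
    have bdd: "bdd_below (E ` {0..})" using Ebelow by (intro bdd_belowI2) auto
    define \<delta> where "\<delta> = \<epsilon> / (2 * (C + 1))"
    have \<delta>0: "\<delta> > 0" unfolding \<delta>_def using \<epsilon> C0 by simp
    have C\<delta>: "C * \<delta> \<le> \<epsilon> / 2"
      unfolding \<delta>_def using \<epsilon> C0 by (simp add: field_simps)
    have "c < c + \<eta> * \<epsilon> * \<delta>" using eta \<epsilon> \<delta>0 by simp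
    then obtain t0 where t0: "t0 \<ge> 0" "E t0 < c + \<eta> * \<epsilon> * \<delta>"
    proof -
      have "\<exists>y\<in>{0..}. E y < c + \<eta> * \<epsilon> * \<delta>"
        using cInf_less_iff[OF _ bdd, of "c + \<eta> * \<epsilon> * \<delta>"] \<open>c < c + \<eta> * \<epsilon> * \<delta>\<close>
        unfolding c_def by auto
      then show ?thesis using that by auto
    qed
    show "eventually (\<lambda>t. K t < \<epsilon>) at_top"
      using eventually_ge_at_top[of t0]
    proof eventually_elim
      fix t assume tt0: "t \<ge> t0"
      then have t0': "t \<ge> 0" using t0 by simp
      show "K t < \<epsilon>"
      proof (rule ccontr)
        assume "\<not> K t < \<epsilon>"
        then have Kt: "K t \<ge> \<epsilon>" by simp
        obtain \<xi> where \<xi>: "\<xi> \<in> {t..t+\<delta>}" "E (t+\<delta>) - E t = - 2 * \<eta> * K \<xi> * (t + \<delta> - t)"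
          using mvt0[OF t0', of "t+\<delta>" E "\<lambda>t. - 2 * \<eta> * K t"] dE \<delta>0 by auto
        have "K \<xi> \<ge> K t - C * (\<xi> - t)" using Klow[of t \<xi>] \<xi> t0' by auto
        moreover have "C * (\<xi> - t) \<le> C * \<delta>" using \<xi> C0 by (simp add: mult_left_mono)
        ultimately have K\<xi>: "K \<xi> \<ge> \<epsilon> / 2" using Kt C\<delta> by simp
        have "E (t+\<delta>) - E t \<le> - \<eta> * \<epsilon> * \<delta>"
        proof -
          have "2 * \<eta> * K \<xi> * \<delta> \<ge> 2 * \<eta> * (\<epsilon> / 2) * \<delta>"
            using K\<xi> eta \<delta>0 by (intro mult_right_mono mult_left_mono) auto
          then show ?thesis using \<xi>(2) by simp
        qed
        moreover have "E t \<le> E t0" using Emono t0 tt0 by simp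
        moreover have "c \<le> E (t+\<delta>)" unfolding c_def
          by (rule cInf_lower[OF _ bdd]) (use t0' \<delta>0 in auto)
        ultimately show False using t0 by simp
      qed
    qed
  qed
  show ?thesis
  proof (rule Lim_null_comparison)
    show "eventually (\<lambda>t. norm (xd t) \<le> sqrt (K t / m)) at_top"
      using eventually_ge_at_top[of 0]
    proof eventually_elim
      fix t :: real assume t: "t \<ge> 0"
      have "(\<Sum>a\<in>UNIV. (xd t $ a)^2) \<le> K t / m"
      proof -
        have "m * (\<Sum>a\<in>UNIV. (xd t $ a)^2) \<le> K t"
          unfolding K_def sum_distrib_left by (rule sum_mono) (use xd2 t in auto)
        then show ?thesis using mpos by (simp add: field_simps)
      qed
      then show "norm (xd t) \<le> sqrt (K t / m)"
        unfolding norm_vec_def L2_set_def by (simp add: real_sqrt_le_mono)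
    qed
    show "((\<lambda>t. sqrt (K t / m)) \<longlongrightarrow> 0) at_top"
      using tendsto_real_sqrt[OF tendsto_divide_zero[OF Klim, of m]] by simp
  qed
qed

end
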